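(* Let $q$ be a prime power and let $d+1$ be a divisor of $q-1$. A $(d+1)$-divisible Dembowski–Ostrom polynomial $f\in\mathbb{F}_q[x]$ is differentially $d$-uniform if and only if $f$ is almost-$(d+1)$-to-1.
   Context: A polynomial $f\in\mathbb{F}_q[x]$, $q=p^n$, is Dembowski–Ostrom (DO) if it can be written as $\sum_{i,j=0}^{n-1}a_{ij}x^{p^i+p^j}$ when $q$ is odd, and as $\sum_{i\neq j}a_{ij}x^{2^i+2^j}$ when $q$ is even. For a divisor $k$ of $q-1$, $f$ is $k$-divisible if $f(x)=f'(x^k)$ for some map $f'$. $f$ is differentially $d$-uniform if $d=\max_{a\neq 0,\,b}|\{x: f(x+a)-f(x)=b\}|$. $f$ is almost-$k$-to-1 if there is a unique element of $\mathrm{Im}(f)$ with exactly one preimage and every other element of $\mathrm{Im}(f)$ has exactly $k$ preimages. *)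

theory Defs
  imports "HOL-Computational_Algebra.Polynomial"
begin

definition DO_poly :: "nat \<Rightarrow> nat \<Rightarrow> 'a::comm_ring_1 poly \<Rightarrow> bool" where
  "DO_poly p n f \<longleftrightarrow>
     (\<exists>a :: nat \<Rightarrow> nat \<Rightarrow> 'a.
        f = (\<Sum>(i,j)\<in>{(i,j). i < n \<and> j < n \<and> (odd (p ^ n) \<or> i \<noteq> j)}.
               monom (a i j) (p ^ i + p ^ j)))"

definition k_divisible :: "nat \<Rightarrow> 'a::comm_ring_1 poly \<Rightarrow> bool" where
  "k_divisible k f \<longleftrightarrow> (\<exists>g :: 'a \<Rightarrow> 'a. \<forall>x. poly f x = g (x ^ k))"

definition diff_uniform :: "('a::{finite,field} \<Rightarrow> 'a) \<Rightarrow> nat \<Rightarrow> bool" where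
  "diff_uniform F d \<longleftrightarrow>
     d = Max {card {x. F (x + a) - F x = b} | a b. a \<noteq> 0}"

definition almost_k_to_1 :: "('a::finite \<Rightarrow> 'b) \<Rightarrow> nat \<Rightarrow> bool" where
  "almost_k_to_1 F k \<longleftrightarrow>
     (\<exists>!y. y \<in> range F \<and> card (F -` {y}) = 1) \<and>
     (\<forall>y \<in> range F. card (F -` {y}) \<noteq> 1 \<longrightarrow> card (F -` {y}) = k)"

end

theory Submission
  imports Defs "HOL-Number_Theory.Residues"
begin

lemma char_eq:
  assumes "prime p" "card (UNIV :: 'a::{finite,field} set) = p ^ n"
  shows "CHAR('a) = p"
proof -
  have pos: "CHAR('a) > 0" by (rule finite_imp_CHAR_pos) simp
  have pr: "prime CHAR('a)" using pos prime_CHAR_semidom by blast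
  have "CHAR('a) dvd p ^ n" using CHAR_dvd_CARD[where 'a='a] assms(2) by simp
  hence "CHAR('a) dvd p" using pr prime_dvd_power by blast
  thus ?thesis using pr assms(1) primes_dvd_imp_eq by blast
qed

lemma DO_additive:
  fixes f :: "'a::{finite,field} poly"
  assumes "prime p" "CHAR('a) = p" "DO_poly p n f"
  shows "\<exists>L. (\<forall>x y. L (x + y) = L x + L y) \<and> (\<forall>x. poly f (x + e) - poly f x = L x + poly f e)"
proof -
  obtain a where f: "f = (\<Sum>(i,j)\<in>{(i,j). i < n \<and> j < n \<and> (odd (p ^ n) \<or> i \<noteq> j)}. Polynomial.monom (a i j) (p ^ i + p ^ j))"
    using assms(3) unfolding DO_poly_def by blast
  define I where "I = {(i,j). i < n \<and> j < n \<and> (odd (p ^ n) \<or> i \<noteq> j)}"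
  have pf: "poly f x = (\<Sum>ij\<in>I. a (fst ij) (snd ij) * (x ^ (p^fst ij) * x ^ (p^snd ij)))" for x
    unfolding f I_def by (simp add: poly_sum poly_monom power_add case_prod_unfold)
  have fr: "(x + y) ^ (p ^ i) = x ^ (p ^ i) + y ^ (p ^ i)" for x y :: 'a and i
    using freshmans_dream'[of "p^i" i x y] assms by simp
  define L where "L x = (\<Sum>ij\<in>I. a (fst ij) (snd ij) * (x ^ (p^fst ij) * e ^ (p^snd ij) + e ^ (p^fst ij) * x ^ (p^snd ij)))" for x
  show ?thesis
  proof (intro exI conjI allI)
    show "L (x + y) = L x + L y" for x y
      unfolding L_def sum.distrib[symmetric]
      by (intro sum.cong refl) (simp add: fr algebra_simps)
    show "poly f (x + e) - poly f x = L x + poly f e" for x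
      unfolding pf L_def sum.distrib[symmetric] sum_subtractf[symmetric]
      by (intro sum.cong refl) (simp add: fr algebra_simps)
  qed
qed

lemma pow_card_minus1:
  fixes x :: "'a::{finite,field}"
  assumes "x \<noteq> 0" shows "x ^ (card (UNIV::'a set) - 1) = 1"
proof -
  have "(\<Prod>y\<in>UNIV-{0}. x * y) = (\<Prod>y\<in>UNIV-{0::'a}. y)"
    by (rule prod.reindex_bij_witness[of _ "\<lambda>y. y / x" "\<lambda>y. x * y"]) (use assms in auto)
  moreover have "(\<Prod>y\<in>UNIV-{0}. x * y) = x ^ card (UNIV - {0::'a}) * (\<Prod>y\<in>UNIV-{0::'a}. y)"
    by (simp add: prod.distrib)
  moreover have "(\<Prod>y\<in>UNIV-{0::'a}. y) \<noteq> 0" by simp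
  moreover have "card (UNIV - {0::'a}) = card (UNIV::'a set) - 1" by (simp add: card_Diff_singleton)
  ultimately show ?thesis by simp
qed

lemma card_pow_eq1_le:
  assumes "k > 0"
  shows "card {w::'a::field. w ^ k = 1} \<le> k"
proof -
  have p0: "Polynomial.monom (1::'a) k - 1 \<noteq> 0"
  proof
    assume "Polynomial.monom (1::'a) k - 1 = 0"
    hence "Polynomial.coeff (Polynomial.monom (1::'a) k - 1) k = 0" by simp
    thus False using assms by simp
  qed
  have "degree (Polynomial.monom (1::'a) k - 1) \<le> k"
    by (intro degree_diff_le) (simp_all add: degree_monom_le)
  moreover have "{w::'a. w ^ k = 1} = {x. poly (Polynomial.monom (1::'a) k - 1) x = 0}"
    by (simp add: poly_monom)
  ultimately show ?thesis using card_poly_roots_bound[OF p0] by simp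
qed

lemma card_roots_unity:
  assumes "k dvd card (UNIV::'a::{finite,field} set) - 1" "k > 0"
  shows "card {w::'a. w ^ k = 1} = k"
proof -
  define R where "R = {w::'a. w ^ k = 1}"
  define q1 where "q1 = card (UNIV::'a set) - 1"
  obtain m where m: "q1 = k * m" using assms(1) q1_def by blast
  have "card (UNIV::'a set) \<ge> 2"
  proof -
    have "{0,1::'a} \<subseteq> UNIV" by simp
    hence "card {0,1::'a} \<le> card (UNIV::'a set)" by (intro card_mono) simp_all
    thus ?thesis by simp
  qed
  hence q1pos: "q1 > 0" using q1_def by simp
  hence mpos: "m > 0" using m by (cases m) simp_all
  define U where "U = (UNIV - {0::'a})"
  have cU: "card U = q1" unfolding U_def q1_def by (simp add: card_Diff_singleton)
  define T where "T = {y::'a. y ^ m = 1}"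
  have cT: "card T \<le> m" unfolding T_def using card_pow_eq1_le[OF mpos] .
  define s where "s y = (SOME x. x \<in> U \<and> x ^ k = y)" for y
  define S where "S = s ` ((\<lambda>x. x ^ k) ` U)"
  have imT: "(\<lambda>x. x ^ k) ` U \<subseteq> T"
  proof
    fix y assume "y \<in> (\<lambda>x. x ^ k) ` U"
    then obtain x where x: "x \<in> U" "y = x ^ k" by blast
    have "y ^ m = x ^ q1" using x m by (simp add: power_mult)
    also have "\<dots> = 1" using pow_card_minus1[of x] x unfolding U_def q1_def by simp
    finally show "y \<in> T" unfolding T_def by simp
  qed
  have cS: "card S \<le> m"
  proof -
    have "card S \<le> card ((\<lambda>x. x ^ k) ` U)" unfolding S_def by (rule card_image_le) simp
    also have "\<dots> \<le> card T" by (intro card_mono imT) simp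
    finally show ?thesis using cT by simp
  qed
  have sub: "U \<subseteq> (\<lambda>(a,w). a * w) ` (S \<times> R)"
  proof
    fix x assume x: "x \<in> U"
    have ex: "\<exists>z. z \<in> U \<and> z ^ k = x ^ k" using x by blast
    have sx: "s (x ^ k) \<in> U \<and> s (x ^ k) ^ k = x ^ k"
      unfolding s_def by (rule someI_ex[OF ex])
    have s0: "s (x ^ k) \<noteq> 0" using sx unfolding U_def by simp
    have "(x / s (x ^ k)) ^ k = 1" using sx s0 x unfolding U_def by (simp add: power_divide)
    hence "x / s (x ^ k) \<in> R" unfolding R_def by simp
    moreover have "s (x ^ k) \<in> S" unfolding S_def using x by blast
    moreover have "x = s (x ^ k) * (x / s (x ^ k))" using s0 by simp
    ultimately show "x \<in> (\<lambda>(a,w). a * w) ` (S \<times> R)" by force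
  qed
  have "q1 \<le> card ((\<lambda>(a,w). a * w) ` (S \<times> R))"
    using cU sub by (metis card_mono finite)
  also have "\<dots> \<le> card (S \<times> R)" by (rule card_image_le) simp
  also have "\<dots> = card S * card R" by (rule card_cartesian_product)
  also have "\<dots> \<le> m * card R" using cS by simp
  finally have "k * m \<le> card R * m" using m by (simp add: mult.commute)
  hence "k \<le> card R" using mpos by simp
  moreover have "card R \<le> k" unfolding R_def by (rule card_pow_eq1_le[OF assms(2)])
  ultimately show ?thesis unfolding R_def by simp
qed


theorem theorem3p3:
  fixes f :: "'a::{finite,field} poly" and p n d :: nat
  assumes "prime p" and "card (UNIV :: 'a set) = p ^ n"
    and "(d + 1) dvd (card (UNIV :: 'a set) - 1)"
    and "DO_poly p n f"
    and "k_divisible (d + 1) f"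
  shows "diff_uniform (poly f) d \<longleftrightarrow> almost_k_to_1 (poly f) (d + 1)"
proof -
  define F where "F = poly f"
  define k where "k = d + 1"
  have kpos: "k > 0" unfolding k_def by simp
  have chr: "CHAR('a) = p" using char_eq[OF assms(1,2)] .
  obtain g where g: "\<forall>x. poly f x = g (x ^ (d+1))" using assms(5) unfolding k_divisible_def by blast
  define R where "R = {w::'a. w ^ k = 1}"
  have cR: "card R = k" unfolding R_def k_def using card_roots_unity[OF assms(3)] by simp
  have oneR: "1 \<in> R" unfolding R_def by simp
  have R0: "w \<in> R \<Longrightarrow> w \<noteq> 0" for w using kpos unfolding R_def by (auto simp: power_0_left)
  have inv: "w \<in> R \<Longrightarrow> F (w * x) = F x" for w x
  proof -
    assume "w \<in> R"
    hence "w ^ (d+1) = 1" unfolding R_def k_def by simp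
    hence "(w * x) ^ (d+1) = x ^ (d+1)" by (simp only: power_mult_distrib) simp
    thus ?thesis using g unfolding F_def by metis
  qed
  have cIm: "x \<noteq> 0 \<Longrightarrow> card ((\<lambda>w. w * x) ` R) = k" for x
    using cR by (subst card_image) (auto intro: inj_onI)
  have ImF: "(\<lambda>w. w * x) ` R \<subseteq> F -` {F x}" for x using inv by auto
  define c where "c a b = card {x. F (x + a) - F x = b}" for a b
  define Z where "Z a = (\<lambda>w. a / (w - 1)) ` (R - {1})" for a
  have Zsub: "Z a \<subseteq> {x. F (x + a) - F x = 0}" for a
  proof
    fix x assume "x \<in> Z a"
    then obtain w where w: "w \<in> R" "w \<noteq> 1" "x = a / (w - 1)" unfolding Z_def by blast
    have "x + a = w * x" using w by (simp add: field_simps)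
    thus "x \<in> {x. F (x + a) - F x = 0}" using inv[OF w(1)] by simp
  qed
  have cZ: "a \<noteq> 0 \<Longrightarrow> card (Z a) = k - 1" for a
  proof -
    assume a: "a \<noteq> 0"
    have "inj_on (\<lambda>w. a / (w - 1)) (R - {1})"
      by (rule inj_onI) (use a in \<open>auto simp: field_simps\<close>)
    hence "card (Z a) = card (R - {1})" unfolding Z_def by (rule card_image)
    thus ?thesis using cR oneR by simp
  qed
  have low: "a \<noteq> 0 \<Longrightarrow> c a 0 \<ge> k - 1" for a
    using cZ[of a] Zsub[of a] unfolding c_def by (metis card_mono finite)
  define P where "P \<longleftrightarrow> (\<forall>a. a \<noteq> 0 \<longrightarrow> c a 0 = k - 1)"
  have PZ: "P \<longleftrightarrow> (\<forall>a. a \<noteq> 0 \<longrightarrow> {x. F (x + a) - F x = 0} = Z a)"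
  proof
    assume P
    show "\<forall>a. a \<noteq> 0 \<longrightarrow> {x. F (x + a) - F x = 0} = Z a"
    proof (intro allI impI)
      fix a :: 'a assume a: "a \<noteq> 0"
      have "card (Z a) = card {x. F (x + a) - F x = 0}" using \<open>P\<close> a cZ[OF a] unfolding P_def c_def by simp
      thus "{x. F (x + a) - F x = 0} = Z a" using Zsub[of a] by (metis card_subset_eq finite)
    qed
  next
    assume "\<forall>a. a \<noteq> 0 \<longrightarrow> {x. F (x + a) - F x = 0} = Z a"
    thus P unfolding P_def c_def using cZ by simp
  qed
  define Q where "Q \<longleftrightarrow> (F -` {F 0} = {0} \<and> (\<forall>x. x \<noteq> 0 \<longrightarrow> F -` {F x} = (\<lambda>w. w * x) ` R))"
  show ?thesis
  proof (cases "k = 1")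
    case True
    hence d0: "d = 0" unfolding k_def by simp
    have l: "\<not> diff_uniform F d"
    proof
      assume "diff_uniform F d"
      hence dm: "d = Max {card {x. F (x + a) - F x = b} | a b. a \<noteq> 0}" unfolding diff_uniform_def .
      have fin: "finite {card {x. F (x + a) - F x = b} | a b. (a::'a) \<noteq> 0}"
      proof (rule finite_subset)
        show "{card {x. F (x + a) - F x = b} | a b. (a::'a) \<noteq> 0} \<subseteq> {..card (UNIV::'a set)}"
          by (auto intro: card_mono)
      qed simp
      have mem: "card {x. F (x + 1) - F x = F 1 - F 0} \<in> {card {x. F (x + a) - F x = b} | a b. (a::'a) \<noteq> 0}"
        by force
      have "card {x. F (x + 1) - F x = F 1 - F 0} \<ge> 1"
      proof -
        have "0 \<in> {x. F (x + 1) - F x = F 1 - F 0}" by simp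
        thus ?thesis by (metis One_nat_def Suc_leI card_gt_0_iff empty_iff finite)
      qed
      with Max_ge[OF fin mem] dm d0 show False by simp
    qed
    have r: "\<not> almost_k_to_1 F (d + 1)"
    proof
      assume "almost_k_to_1 F (d + 1)"
      hence A1: "\<exists>!y. y \<in> range F \<and> card (F -` {y}) = 1"
        and A2: "\<forall>y\<in>range F. card (F -` {y}) \<noteq> 1 \<longrightarrow> card (F -` {y}) = d + 1"
        unfolding almost_k_to_1_def by blast+
      have c0: "card (F -` {F 0}) = 1" and c1: "card (F -` {F 1}) = 1" using A2 d0 by auto
      have "F 0 = F 1" using A1 c0 c1 by blast
      hence "{0,1} \<subseteq> F -` {F 0}" by auto
      hence "card {0,1::'a} \<le> card (F -` {F 0})" by (intro card_mono) simp_all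
      thus False using c0 by simp
    qed
    show ?thesis using l r unfolding F_def by simp
  next
    case False
    hence k2: "k \<ge> 2" using kpos by simp
    have L1: "diff_uniform F d \<longleftrightarrow> P"
    proof -
      define S where "S = {card {x. F (x + a) - F x = b} | a b. (a::'a) \<noteq> 0}"
      have fin: "finite S"
      proof (rule finite_subset)
        show "S \<subseteq> {..card (UNIV::'a set)}" unfolding S_def
          by (auto intro: card_mono)
      qed simp
      have memS: "a \<noteq> 0 \<Longrightarrow> c a b \<in> S" for a b unfolding S_def c_def by blast
      have du: "diff_uniform F d \<longleftrightarrow> d = Max S" unfolding diff_uniform_def S_def ..
      show ?thesis
      proof
        assume "diff_uniform F d"
        hence dm: "d = Max S" using du by simp
        show P unfolding P_def
        proof (intro allI impI)
          fix a :: 'a assume a: "a \<noteq> 0"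
          have "c a 0 \<le> d" using Max_ge[OF fin memS[OF a]] dm by simp
          thus "c a 0 = k - 1" using low[OF a] k_def by simp
        qed
      next
        assume P
        have "Max S = d"
        proof (rule Max_eqI[OF fin])
          show "d \<in> S" using memS[of 1 0] \<open>P\<close> unfolding P_def k_def by simp
        next
          fix s assume "s \<in> S"
          then obtain a b where a: "a \<noteq> 0" and s: "s = c a b" unfolding S_def c_def by blast
          obtain L where Ladd: "\<forall>x y. L (x + y) = L x + L y"
            and LF: "\<forall>x. F (x + a) - F x = L x + F a"
            using DO_additive[OF assms(1) chr assms(4), of a] unfolding F_def by blast
          have Lsub: "L (u - v) = L u - L v" for u v
            using Ladd[rule_format, of v "u - v"] by (simp add: algebra_simps)
          have set_eq: "{x. F (x + a) - F x = t} = {x. L x = t - F a}" for t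
            using LF by (auto simp: algebra_simps)
          have ca0: "c a 0 = k - 1" using \<open>P\<close> a unfolding P_def by simp
          hence "c a 0 > 0" using k2 by simp
          then obtain x0 where x0: "L x0 = 0 - F a"
            unfolding c_def set_eq by (metis (mono_tags, lifting) card.empty emptyE less_irrefl mem_Collect_eq subsetI subset_antisym bot.extremum)
          show "s \<le> d"
          proof (cases "{x. L x = b - F a} = {}")
            case True thus ?thesis using s unfolding c_def set_eq by simp
          next
            case False
            then obtain x1 where x1: "L x1 = b - F a" by blast
            have "inj_on (\<lambda>x. x - x1 + x0) {x. L x = b - F a}" by (rule inj_onI) simp
            moreover have "(\<lambda>x. x - x1 + x0) ` {x. L x = b - F a} \<subseteq> {x. L x = 0 - F a}"
              using x0 x1 Lsub Ladd by auto
            ultimately have "card {x. L x = b - F a} \<le> card {x. L x = 0 - F a}"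
              by (metis card_image card_mono finite)
            thus ?thesis using s ca0 unfolding c_def set_eq k_def by simp
          qed
        qed
        thus "diff_uniform F d" using du by simp
      qed
    qed
    have L2: "P \<longleftrightarrow> Q"
    proof
      assume P
      hence Zeq: "a \<noteq> 0 \<Longrightarrow> {x. F (x + a) - F x = 0} = Z a" for a using PZ by blast
      have C: "F y = F x \<Longrightarrow> \<exists>w\<in>R. y = w * x" for x y
      proof -
        assume e: "F y = F x"
        show ?thesis
        proof (cases "y = x")
          case True thus ?thesis using oneR by force
        next
          case False
          hence a: "y - x \<noteq> 0" by simp
          have "x \<in> {x'. F (x' + (y - x)) - F x' = 0}" using e by simp
          hence "x \<in> Z (y - x)" using Zeq[OF a] by (metis (no_types, lifting))
          then obtain w where w: "w \<in> R" "w \<noteq> 1" "x = (y - x) / (w - 1)" unfolding Z_def by blast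
          hence "y = w * x" using w by (simp add: field_simps)
          thus ?thesis using w(1) by blast
        qed
      qed
      show Q unfolding Q_def
      proof (intro conjI allI impI)
        show "F -` {F 0} = {0}" using C by fastforce
      next
        fix x :: 'a assume "x \<noteq> 0"
        show "F -` {F x} = (\<lambda>w. w * x) ` R"
          using C ImF[of x] by auto
      qed
    next
      assume Q
      show P unfolding PZ
      proof (intro allI impI)
        fix a :: 'a assume a: "a \<noteq> 0"
        have "{x. F (x + a) - F x = 0} \<subseteq> Z a"
        proof
          fix x assume "x \<in> {x. F (x + a) - F x = 0}"
          hence e: "F (x + a) = F x" by simp
          have x0: "x \<noteq> 0"
          proof
            assume "x = 0"
            hence "a \<in> F -` {F 0}" using e by simp
            thus False using \<open>Q\<close> a unfolding Q_def by simp
          qed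
          have "x + a \<in> F -` {F x}" using e by simp
          hence "x + a \<in> (\<lambda>w. w * x) ` R" using \<open>Q\<close> x0 unfolding Q_def by blast
          then obtain w where w: "w \<in> R" "x + a = w * x" by blast
          have w1: "w \<noteq> 1" using w a by auto
          hence "x = a / (w - 1)" using w by (simp add: field_simps)
          thus "x \<in> Z a" unfolding Z_def using w w1 by blast
        qed
        thus "{x. F (x + a) - F x = 0} = Z a" using Zsub[of a] by blast
      qed
    qed
    have L3: "Q \<longleftrightarrow> almost_k_to_1 F k"
    proof
      assume Q
      have cx: "x \<noteq> 0 \<Longrightarrow> card (F -` {F x}) = k" for x using \<open>Q\<close> cIm unfolding Q_def by simp
      have c0: "card (F -` {F 0}) = 1" using \<open>Q\<close> unfolding Q_def by simp
      show "almost_k_to_1 F k" unfolding almost_k_to_1_def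
      proof (intro conjI ballI impI)
        show "\<exists>!y. y \<in> range F \<and> card (F -` {y}) = 1"
        proof (rule ex1I[of _ "F 0"])
          show "F 0 \<in> range F \<and> card (F -` {F 0}) = 1" using c0 by simp
        next
          fix y assume y: "y \<in> range F \<and> card (F -` {y}) = 1"
          then obtain x where x: "y = F x" by blast
          show "y = F 0"
          proof (cases "x = 0")
            case False thus ?thesis using cx[OF False] y x k2 by simp
          qed (use x in simp)
        qed
      next
        fix y assume y: "y \<in> range F" "card (F -` {y}) \<noteq> 1"
        then obtain x where x: "y = F x" by blast
        have "x \<noteq> 0" using c0 x y by auto
        thus "card (F -` {y}) = k" using cx x by simp
      qed
    next
      assume A: "almost_k_to_1 F k"
      hence A2: "\<And>y. y \<in> range F \<Longrightarrow> card (F -` {y}) \<noteq> 1 \<Longrightarrow> card (F -` {y}) = k"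
        unfolding almost_k_to_1_def by blast
      have fib: "x \<noteq> 0 \<Longrightarrow> F -` {F x} = (\<lambda>w. w * x) ` R" for x
      proof -
        assume x: "x \<noteq> 0"
        have "card ((\<lambda>w. w * x) ` R) \<le> card (F -` {F x})"
          using ImF[of x] by (intro card_mono) simp_all
        hence "card (F -` {F x}) \<ge> 2" using cIm[OF x] k2 by simp
        hence "card (F -` {F x}) = k" using A2[of "F x"] by simp
        thus ?thesis using ImF[of x] cIm[OF x] by (metis card_subset_eq finite)
      qed
      have "F -` {F 0} \<subseteq> {0}"
      proof
        fix y assume y: "y \<in> F -` {F 0}"
        show "y \<in> {0}"
        proof (rule ccontr)
          assume "y \<notin> {0}"
          hence y0: "y \<noteq> 0" by simp
          have "F 0 = F y" using y by simp
          hence "0 \<in> F -` {F y}" by simp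
          hence "0 \<in> (\<lambda>w. w * y) ` R" using fib[OF y0] by simp
          then obtain w where "w \<in> R" "0 = w * y" by blast
          thus False using R0 y0 by simp
        qed
      qed
      hence "F -` {F 0} = {0}" by auto
      thus Q unfolding Q_def using fib by blast
    qed
    show ?thesis using L1 L2 L3 unfolding F_def k_def by simp
  qed
qed

end
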